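(* In the standing setup with a single fluid, and with $t_{\mathrm b},\xi_{\mathrm b},\xi_0,t_0$ as in the time-interval setup, let $$b:=\max_{t\in[t_{\mathrm b},t_0]}\frac{\sqrt2\,|y_{\mathrm i}(t)|\,h(t)}{l}$$ and assume $b>0$. Then $$\Delta t_{\mathrm b0}\ \ge\ \frac{1}{2\sqrt{2\xi_0}}\,\frac{1}{b\,c\,l}\,(\xi_0-\xi_{\mathrm b}).$$
   Context: Standing setup. Fix real constants $c>0$ and $l>0$, a nonempty finite index set $A$, and constants $w_\alpha\in[-1,1]$ for $\alpha\in A$. Let $I\subseteq\mathbb{R}$ be an interval and let $x,y_{\mathrm r},y_{\mathrm i},h,z_\alpha$ ($\alpha\in A$) be real $C^1$ functions of $t\in I$ with $h>0$ and $z_\alpha\ge 0$. Define $\xi(t)=x(t)^2+\sum_{\beta\in A}\frac{1+w_\beta}{2}z_\beta(t)^2$. Assume that on $I$: $\dot x=\big[-x+4c\,y_{\mathrm r}y_{\mathrm i}+x\,\xi\big]h$, $\dot y_{\mathrm r}=\big[\xi\,y_{\mathrm r}-c\,x\,y_{\mathrm i}\big]h$, $\dot y_{\mathrm i}=\big[\xi\,y_{\mathrm i}+c\,x\,y_{\mathrm r}\big]h$, $\dot z_\alpha=\big[-\tfrac{1+w_\alpha}{2}+\xi\big]z_\alpha h$, $\dot h=-\xi h^2$, together with the constraints $x^2+4y_{\mathrm r}^2+\sum_{\beta\in A}z_\beta^2=1$ and $y_{\mathrm r}^2+y_{\mathrm i}^2=\frac{l^2}{2h^2}$. Single fluid: $A$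 has exactly one element; write $z$ and $w$ for $z_\alpha$ and $w_\alpha$. Time-interval setup: let $t_{\mathrm b}\in I$, $\xi_{\mathrm b}:=\xi(t_{\mathrm b})$, and let $\xi_0$ be a real number with $\xi_0>0$ and $\xi_{\mathrm b}\le\xi_0\le\frac{1+w}{2}$. Assume the set $\{t\in I:\ t\ge t_{\mathrm b},\ \xi(t)=\xi_0\}$ is nonempty and let $t_0$ be its minimum (so $\xi(t)\le\xi_0$ for all $t\in[t_{\mathrm b},t_0]$); put $\Delta t_{\mathrm b0}=t_0-t_{\mathrm b}$. (Physically, $\sqrt2\,|y_{\mathrm i}|h/l=|\cos(\phi/2f)|$, so $b$ measures the maximal displacement of the axion from the hilltop.) *)

theory Defs
  imports "HOL-Analysis.Analysis"
begin

definition xi_sf :: "real \<Rightarrow> (real \<Rightarrow> real) \<Rightarrow> (real \<Rightarrow> real) \<Rightarrow> real \<Rightarrow> real" where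
  "xi_sf w x z t = (x t)\<^sup>2 + (1 + w) / 2 * (z t)\<^sup>2"

end

theory Submission
  imports Defs
begin

lemma Dbound:
  fixes xx yr yi hh zz k c b l xi0 xi :: real
  assumes hp: "hh > 0" and c_pos: "c > 0" and k0: "0 \<le> k" "k \<le> 1"
    and xik: "xi = xx\<^sup>2 + k * zz\<^sup>2" and xile0: "xi \<le> xi0" and xi0k: "xi0 \<le> k"
    and c1: "xx\<^sup>2 + 4 * yr\<^sup>2 + zz\<^sup>2 = 1"
    and yib: "\<bar>yi\<bar> * hh \<le> b * l / sqrt 2"
  shows "2 * xx * ((- xx + 4 * c * yr * yi + xx * xi) * hh) + k * (2 * zz * ((- k + xi) * zz * hh))
     \<le> 2 * sqrt (2 * xi0) * b * c * l"
proof -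
  have xile: "xi \<le> k" "xi \<le> 1" using xile0 xi0k k0 by auto
  have D_eq: "2 * xx * ((- xx + 4 * c * yr * yi + xx * xi) * hh) + k * (2 * zz * ((- k + xi) * zz * hh))
     = 2 * hh * (xi\<^sup>2 - xx\<^sup>2 - k\<^sup>2 * zz\<^sup>2) + 8 * c * hh * xx * yr * yi"
    unfolding xik by (simp add: power2_eq_square algebra_simps)
  have A: "xi\<^sup>2 \<le> xx\<^sup>2 + k\<^sup>2 * zz\<^sup>2"
  proof -
    have "xi\<^sup>2 = xi * xx\<^sup>2 + xi * (k * zz\<^sup>2)" by (simp add: xik power2_eq_square algebra_simps)
    also have "\<dots> \<le> 1 * xx\<^sup>2 + k * (k * zz\<^sup>2)"
      by (intro add_mono mult_right_mono xile) (use k0 in auto)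
    finally show ?thesis by (simp add: power2_eq_square)
  qed
  have xb: "\<bar>xx\<bar> \<le> sqrt xi0"
  proof -
    have "k * zz\<^sup>2 \<ge> 0" using k0 by simp
    then have "xx\<^sup>2 \<le> xi0" using xik xile0 by linarith
    then show ?thesis by (metis real_sqrt_abs real_sqrt_le_mono)
  qed
  have yrb: "\<bar>yr\<bar> \<le> 1/2"
  proof -
    have "(2 * yr)\<^sup>2 \<le> 1" 
    proof -
      have "(2 * yr)\<^sup>2 = 4 * yr\<^sup>2" by (simp add: power_mult_distrib)
      then show ?thesis using c1 zero_le_power2[of xx] zero_le_power2[of zz] by linarith
    qed
    then have "\<bar>2 * yr\<bar> \<le> 1" using abs_le_square_iff[of "2*yr" 1] by simp
    then show ?thesis by simp
  qed
  have "hh * xx * yr * yi \<le> \<bar>xx\<bar> * \<bar>yr\<bar> * (\<bar>yi\<bar> * hh)"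
  proof -
    have "hh * xx * yr * yi \<le> \<bar>hh * xx * yr * yi\<bar>" by simp
    also have "\<dots> = \<bar>xx\<bar> * \<bar>yr\<bar> * (\<bar>yi\<bar> * hh)" using hp by (simp add: abs_mult)
    finally show ?thesis .
  qed
  then have "8 * c * hh * xx * yr * yi \<le> 8 * c * (\<bar>xx\<bar> * \<bar>yr\<bar> * (\<bar>yi\<bar> * hh))"
    using c_pos by (simp add: mult.assoc)
  also have "\<dots> \<le> 8 * c * (sqrt xi0 * (1/2) * (b * l / sqrt 2))"
  proof -
    have "0 \<le> xi" using xik k0 by simp
    then have "0 \<le> xi0" using xile0 by simp
    then show ?thesis using c_pos xb yrb yib hp by (intro mult_left_mono mult_mono) auto
  qed
  also have "\<dots> = 2 * sqrt (2 * xi0) * b * c * l"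
    by (simp add: real_sqrt_mult field_simps)
  finally have "8 * c * hh * xx * yr * yi \<le> 2 * sqrt (2 * xi0) * b * c * l" .
  moreover have "2 * hh * (xi\<^sup>2 - xx\<^sup>2 - k\<^sup>2 * zz\<^sup>2) \<le> 0"
    using A hp by (simp add: mult_nonneg_nonpos)
  ultimately show ?thesis unfolding D_eq by linarith
qed
lemma A1: fixes y hh l :: real assumes "hh > 0" "l > 0" "y\<^sup>2 \<le> l\<^sup>2 / (2 * hh\<^sup>2)"
  shows "sqrt 2 * \<bar>y\<bar> * hh / l \<le> 1"
proof -
  have i: "y\<^sup>2 * (2 * hh\<^sup>2) \<le> l\<^sup>2"
    using assms(3) pos_le_divide_eq[of "2 * hh\<^sup>2" "y\<^sup>2" "l\<^sup>2"] assms(1) by simp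
  have eq: "(sqrt 2 * \<bar>y\<bar> * hh)\<^sup>2 = y\<^sup>2 * (2 * hh\<^sup>2)"
    by (simp add: power_mult_distrib)
  have "(sqrt 2 * \<bar>y\<bar> * hh)\<^sup>2 \<le> l\<^sup>2" unfolding eq by (rule i)
  then have le: "sqrt 2 * \<bar>y\<bar> * hh \<le> l"
    by (rule power2_le_imp_le) (use assms(2) in simp)
  show ?thesis using le assms(2) by (simp add: divide_le_eq_1_pos)
qed
lemma B1: fixes y hh l b :: real assumes "l > 0" "sqrt 2 * \<bar>y\<bar> * hh / l \<le> b"
  shows "\<bar>y\<bar> * hh \<le> b * l / sqrt 2"
proof -
  have "sqrt 2 * \<bar>y\<bar> * hh \<le> b * l" using assms(2) pos_divide_le_eq[OF assms(1)] by blast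
  then have "\<bar>y\<bar> * hh * sqrt 2 \<le> b * l" by (simp add: algebra_simps)
  then show ?thesis using pos_le_divide_eq[of "sqrt 2" "\<bar>y\<bar> * hh" "b * l"] by simp
qed
theorem lemma3:
  fixes c l w :: real and I :: "real set"
    and x yr yi h z :: "real \<Rightarrow> real"
    and tb t0 xi0 b :: real
  assumes c_pos: "c > 0" and l_pos: "l > 0"
    and w_range: "-1 \<le> w" "w \<le> 1"
    and I_int: "is_interval I"
    and h_pos: "\<And>t. t \<in> I \<Longrightarrow> h t > 0"
    and z_nonneg: "\<And>t. t \<in> I \<Longrightarrow> z t \<ge> 0"
    and dx: "\<And>t. t \<in> I \<Longrightarrow> (x has_real_derivative
        ((- x t + 4 * c * yr t * yi t + x t * xi_sf w x z t) * h t)) (at t within I)"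
    and dyr: "\<And>t. t \<in> I \<Longrightarrow> (yr has_real_derivative
        ((xi_sf w x z t * yr t - c * x t * yi t) * h t)) (at t within I)"
    and dyi: "\<And>t. t \<in> I \<Longrightarrow> (yi has_real_derivative
        ((xi_sf w x z t * yi t + c * x t * yr t) * h t)) (at t within I)"
    and dz: "\<And>t. t \<in> I \<Longrightarrow> (z has_real_derivative
        ((- (1 + w) / 2 + xi_sf w x z t) * z t * h t)) (at t within I)"
    and dh: "\<And>t. t \<in> I \<Longrightarrow> (h has_real_derivative
        (- xi_sf w x z t * (h t)\<^sup>2)) (at t within I)"
    and constr1: "\<And>t. t \<in> I \<Longrightarrow> (x t)\<^sup>2 + 4 * (yr t)\<^sup>2 + (z t)\<^sup>2 = 1"
    and constr2: "\<And>t. t \<in> I \<Longrightarrow> (yr t)\<^sup>2 + (yi t)\<^sup>2 = l\<^sup>2 / (2 * (h t)\<^sup>2)"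
    and tb_in: "tb \<in> I"
    and xi0_pos: "xi0 > 0"
    and xi0_ge: "xi_sf w x z tb \<le> xi0"
    and xi0_le: "xi0 \<le> (1 + w) / 2"
    and t0_in: "t0 \<in> {t \<in> I. t \<ge> tb \<and> xi_sf w x z t = xi0}"
    and t0_min: "\<And>t. t \<in> {t \<in> I. t \<ge> tb \<and> xi_sf w x z t = xi0} \<Longrightarrow> t0 \<le> t"
    and b_def: "b = (SUP t\<in>{tb..t0}. sqrt 2 * \<bar>yi t\<bar> * h t / l)"
    and b_pos: "b > 0"
  shows "t0 - tb \<ge> 1 / (2 * sqrt (2 * xi0)) * (1 / (b * c * l)) * (xi0 - xi_sf w x z tb)"
proof -
  let ?xi = "xi_sf w x z"
  define k where "k = (1 + w) / 2"
  define M where "M = 2 * sqrt (2 * xi0) * b * c * l"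
  define X where "X t = (- x t + 4 * c * yr t * yi t + x t * ?xi t) * h t" for t
  define Z where "Z t = (- (1 + w) / 2 + ?xi t) * z t * h t" for t
  define D where "D t = 2 * x t * X t + (1 + w) / 2 * (2 * z t * Z t)" for t
  have xi_eq: "?xi = (\<lambda>t. (x t)\<^sup>2 + (1 + w) / 2 * (z t)\<^sup>2)"
    by (rule ext) (simp add: xi_sf_def)
  have dxi: "(?xi has_real_derivative D t) (at t within I)" if "t \<in> I" for t
  proof -
    have "((\<lambda>t. (x t)\<^sup>2 + (1 + w) / 2 * (z t)\<^sup>2) has_real_derivative
        2 * x t * X t + (1 + w) / 2 * (2 * z t * Z t)) (at t within I)"
      using dx[OF that] dz[OF that] unfolding X_def Z_def
      by (auto intro!: derivative_eq_intros)
    then show ?thesis unfolding xi_eq D_def .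
  qed
  have cont: "continuous_on I ?xi"
    using dxi by (meson DERIV_continuous continuous_on_eq_continuous_within)
  have t0I: "t0 \<in> I" and tbt0: "tb \<le> t0" and xit0: "?xi t0 = xi0" using t0_in by auto
  have sub: "{tb..t0} \<subseteq> I"
  proof
    fix s assume s: "s \<in> {tb..t0}"
    have "\<forall>a\<in>I. \<forall>b\<in>I. \<forall>x. a \<le> x \<and> x \<le> b \<longrightarrow> x \<in> I" using I_int is_interval_1 by blast
    then show "s \<in> I" using tb_in t0I s by (meson atLeastAtMost_iff)
  qed
  have xi_le: "?xi t \<le> xi0" if "t \<in> {tb..t0}" for t
  proof (rule ccontr)
    assume "\<not> ?thesis"
    then have gt: "?xi t > xi0" by simp
    have cc: "continuous_on {tb..t} ?xi"
      using cont sub that by (meson atLeastAtMost_iff atLeastatMost_subset_iff continuous_on_subset order_refl)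
    have tt: "tb \<le> t" "t \<le> t0" using that by auto
    from IVT'[of ?xi tb xi0 t, OF xi0_ge less_imp_le[OF gt] tt(1) cc]
    obtain s where s: "tb \<le> s" "s \<le> t" "?xi s = xi0" by blast
    have "s \<in> I" using sub s that by auto
    then have "t0 \<le> s" using t0_min s by auto
    moreover have "t \<noteq> t0" using gt xit0 by auto
    ultimately show False using s that by auto
  qed
  have bdd: "bdd_above ((\<lambda>t. sqrt 2 * \<bar>yi t\<bar> * h t / l) ` {tb..t0})"
  proof (rule bdd_aboveI2)
    fix t assume t: "t \<in> {tb..t0}"
    then have tI: "t \<in> I" using sub by auto
    have "(yi t)\<^sup>2 \<le> l\<^sup>2 / (2 * (h t)\<^sup>2)" using constr2[OF tI] zero_le_power2[of "yr t"] by linarith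
    then show "sqrt 2 * \<bar>yi t\<bar> * h t / l \<le> 1" by (rule A1[OF h_pos[OF tI] l_pos])
  qed
  have Dle: "D t \<le> M" if t: "t \<in> {tb..t0}" for t
  proof -
    have tI: "t \<in> I" using sub t by auto
    have k0: "0 \<le> k" "k \<le> 1" using w_range unfolding k_def by auto
    have xik: "?xi t = (x t)\<^sup>2 + k * (z t)\<^sup>2" unfolding k_def xi_sf_def by simp
    have "sqrt 2 * \<bar>yi t\<bar> * h t / l \<le> b"
      unfolding b_def using bdd t by (rule cSUP_upper2) simp
    then have yib: "\<bar>yi t\<bar> * h t \<le> b * l / sqrt 2" by (rule B1[OF l_pos])
    have "D t = 2 * x t * ((- x t + 4 * c * yr t * yi t + x t * ?xi t) * h t) + k * (2 * z t * ((- k + ?xi t) * z t * h t))"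
    proof -
      have kk1: "- (1 + w) / 2 = - k" unfolding k_def by (rule minus_divide_left[symmetric])
      have kk2: "(1 + w) / 2 = k" unfolding k_def by simp
      show ?thesis unfolding D_def X_def Z_def kk1 kk2 by (rule refl)
    qed
    also have "\<dots> \<le> M" unfolding M_def
      by (rule Dbound[OF h_pos[OF tI] c_pos k0 xik xi_le[OF t] _ constr1[OF tI] yib]) (use xi0_le k_def in simp)
    finally show ?thesis .
  qed
  have main: "xi0 - ?xi tb \<le> M * (t0 - tb)"
  proof (cases "tb = t0")
    case True then show ?thesis using xit0 by simp
  next
    case False
    then have lt: "tb < t0" using tbt0 by simp
    have dD: "DERIV ?xi s :> D s" if s: "tb < s" "s < t0" for s
    proof -
      have sI: "s \<in> I" using sub s by auto
      have d: "(?xi has_real_derivative D s) (at s within I)" by (rule dxi[OF sI])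
      have ss: "{tb<..<t0} \<subseteq> I" using sub by (meson greaterThanLessThan_subseteq_atLeastAtMost_iff order_refl subset_trans)
      have d2: "(?xi has_real_derivative D s) (at s within {tb<..<t0})" by (rule DERIV_subset[OF d ss])
      have eq: "at s within {tb<..<t0} = at s" by (rule at_within_open) (use s in auto)
      show ?thesis using d2 unfolding eq .
    qed
    have "\<exists>L s. tb < s \<and> s < t0 \<and> DERIV ?xi s :> L \<and> ?xi t0 - ?xi tb = (t0 - tb) * L"
    proof (rule MVT[OF lt])
      show "continuous_on {tb..t0} ?xi" using cont sub by (rule continuous_on_subset)
      fix s assume s: "tb < s" "s < t0"
      show "?xi differentiable (at s)" using dD[OF s] real_differentiable_def by blast
    qed
    then obtain L s where s: "tb < s" "s < t0" "DERIV ?xi s :> L" "?xi t0 - ?xi tb = (t0 - tb) * L" by blast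
    have "L = D s" using dD[OF s(1,2)] s(3) by (rule DERIV_unique[symmetric])
    moreover have "s \<in> {tb..t0}" using s by simp
    ultimately have LM: "L \<le> M" using Dle by blast
    have "(t0 - tb) * L \<le> (t0 - tb) * M" using LM lt by (intro mult_left_mono) simp_all
    then show ?thesis using s(4) xit0 by (simp only: mult.commute)
  qed
  have Mpos: "M > 0" unfolding M_def using xi0_pos b_pos c_pos l_pos by simp
  have "1 / (2 * sqrt (2 * xi0)) * (1 / (b * c * l)) * (xi0 - ?xi tb) = (xi0 - ?xi tb) / M"
    unfolding M_def by (simp add: field_simps)
  also have "\<dots> \<le> t0 - tb" using main pos_divide_le_eq[OF Mpos] by (simp only: mult.commute)
  finally show ?thesis .
qed

end
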